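(* Let $\mathcal{X},\mathcal{Y}$ be real Hilbert spaces, $a:\mathcal{X}\times\mathcal{Y}\to\mathbb{R}$ bilinear with $|a(w,v)|\le C_a\|w\|_\mathcal{X}\|v\|_\mathcal{Y}$, $f\in\mathcal{Y}^\star$, and $u\in\mathcal{X}$ with $a(u,v)=f(v)$ for all $v\in\mathcal{Y}$. Let $\ell,N\in\mathbb{N}$ and let $\mathcal{X}_\ell\subseteq\mathcal{X}_{\ell+1}\subseteq\dots\subseteq\mathcal{X}_{\ell+N+1}\subseteq\mathcal{X}$ and $\mathcal{Y}_\ell\subseteq\dots\subseteq\mathcal{Y}_{\ell+N+1}\subseteq\mathcal{Y}$ be finite-dimensional subspaces with $\dim\mathcal{X}_{\ell+k}=\dim\mathcal{Y}_{\ell+k}$ and $\inf_{w\in\mathcal{X}_{\ell+k}}\sup_{v\in\mathcal{Y}_{\ell+k}}\frac{a(w,v)}{\|w\|_\mathcal{X}\|v\|_\mathcal{Y}}\ge\gamma>0$ for $k=0,\dots,N+1$, and let $u_{\ell+k}\in\mathcal{X}_{\ell+k}$ be the unique solutions of $a(u_{\ell+k},v)=f(v)$ for all $v\in\mathcal{Y}_{\ell+k}$. Let $M$ be the block matrix associated with these spaces as in the context. If $M$ has a normalized block-$LU$-factorization $M=LU$, then $$\sum_{k=\ell}^{\ell+N}\|u_{k+1}-u_k\|_\mathcal{X}^2\le\frac{C_a^2}{\gamma^2}\,\|U\|_2^2\max_{k=1,\dots,N+1}\|U^{-1}(:,k)\|_2^2\,\|u-u_\ell\|_\mathcal{X}^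2.$$
   Context: Nested orthonormal basis: let $\mathcal{B}_0^\mathcal{X}$ be an $\mathcal{X}$-orthonormal basis of $\mathcal{X}_\ell$ and, for $j=1,\dots,N+1$, $\mathcal{B}_j^\mathcal{X}$ an $\mathcal{X}$-orthonormal basis of $\{v\in\mathcal{X}_{\ell+j}: v\perp_\mathcal{X}\mathcal{X}_{\ell+j-1}\}$; analogously $\mathcal{B}_j^\mathcal{Y}$ with respect to $\mathcal{Y}$. Enumerate $\bigcup_j\mathcal{B}^\mathcal{X}_j=\{w_1^\mathcal{X},\dots,w_{\rm dim}^\mathcal{X}\}$ (${\rm dim}=\dim\mathcal{X}_{\ell+N+1}$) so that functions of $\mathcal{B}_j^\mathcal{X}$ precede those of $\mathcal{B}_{j+1}^\mathcal{X}$, and likewise $w_r^\mathcal{Y}$. Block structure: $n_0=0$, $n_{j+1}:=\dim\mathcal{X}_{\ell+j}$, $j=0,\dots,N+1$. $M\in\mathbb{R}^{{\rm dim}\times{\rm dim}}$, $M_{rt}:=a(w_t^\mathcal{X},w_r^\mathcal{Y})$. For a block matrix, block $(i,j)$ (indices from $0$) consists of rows $n_i+1,\dots,n_{i+1}$ and columns $n_j+1,\dots,n_{j+1}$; $M(:,j)$ denotes the $j$-th block column. A normalized block-$LU$-factorization is $M=LU$ with $L$ block lower triangular with identity diagonal blocks and $U$ block upper triangular. $\|\cdot\|_2$ is the spectral norm. *)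

theory Defs
  imports "HOL-Analysis.Analysis"
begin

definition fin_dim_subspace :: "'a::real_vector set \<Rightarrow> bool" where
  "fin_dim_subspace S \<longleftrightarrow> subspace S \<and> (\<exists>B. finite B \<and> span B = S)"

definition blk_bd :: "(nat \<Rightarrow> 'a::real_vector set) \<Rightarrow> nat \<Rightarrow> nat \<Rightarrow> nat" where
  "blk_bd Xs l j = (if j = 0 then 0 else dim (Xs (l + (j - 1))))"

definition blk_space :: "(nat \<Rightarrow> 'a::real_inner set) \<Rightarrow> nat \<Rightarrow> nat \<Rightarrow> 'a set" where
  "blk_space Xs l j = (if j = 0 then Xs l
     else {v \<in> Xs (l + j). \<forall>x \<in> Xs (l + j - 1). inner v x = 0})"

definition is_onb :: "(nat \<Rightarrow> 'a::real_inner) \<Rightarrow> nat set \<Rightarrow> 'a set \<Rightarrow> bool" where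
  "is_onb w I S \<longleftrightarrow> (\<forall>i\<in>I. w i \<in> S) \<and>
     (\<forall>i\<in>I. \<forall>j\<in>I. inner (w i) (w j) = (if i = j then 1 else 0)) \<and>
     span (w ` I) = S"

text \<open>Nested orthonormal basis (0-based enumeration w_0, ..., w_(dim-1)): for each
  j = 0..N+1 the functions with indices n_j, ..., n_(j+1)-1 form the orthonormal basis
  B_j of the j-th block space; the functions of B_j precede those of B_(j+1).\<close>
definition nested_onb :: "(nat \<Rightarrow> 'a::real_inner set) \<Rightarrow> nat \<Rightarrow> nat \<Rightarrow> (nat \<Rightarrow> 'a) \<Rightarrow> bool" where
  "nested_onb Xs l N w \<longleftrightarrow>
     (\<forall>j \<le> N + 1. is_onb w {blk_bd Xs l j..<blk_bd Xs l (Suc j)} (blk_space Xs l j))"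

text \<open>Matrices are functions nat => nat => real, only entries with indices
  below the stated sizes are relevant (0-based indices).\<close>
definition in_block :: "(nat \<Rightarrow> nat) \<Rightarrow> nat \<Rightarrow> nat \<Rightarrow> bool" where
  "in_block n b i \<longleftrightarrow> n b \<le> i \<and> i < n (Suc b)"

definition block_lower_unit :: "(nat \<Rightarrow> nat) \<Rightarrow> nat \<Rightarrow> (nat \<Rightarrow> nat \<Rightarrow> real) \<Rightarrow> bool" where
  "block_lower_unit n nb L \<longleftrightarrow>
     (\<forall>bi < nb. \<forall>bj < nb. \<forall>i j. in_block n bi i \<longrightarrow> in_block n bj j \<longrightarrow>
        (bi < bj \<longrightarrow> L i j = 0) \<and> (bi = bj \<longrightarrow> L i j = (if i = j then 1 else 0)))"

definition block_upper :: "(nat \<Rightarrow> nat) \<Rightarrow> nat \<Rightarrow> (nat \<Rightarrow> nat \<Rightarrow> real) \<Rightarrow> bool" where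
  "block_upper n nb U \<longleftrightarrow>
     (\<forall>bi < nb. \<forall>bj < nb. \<forall>i j. in_block n bi i \<longrightarrow> in_block n bj j \<longrightarrow>
        (bj < bi \<longrightarrow> U i j = 0))"

definition mat_mul :: "nat \<Rightarrow> (nat \<Rightarrow> nat \<Rightarrow> real) \<Rightarrow> (nat \<Rightarrow> nat \<Rightarrow> real) \<Rightarrow> nat \<Rightarrow> nat \<Rightarrow> real" where
  "mat_mul d A B i j = (\<Sum>k<d. A i k * B k j)"

definition spec_norm :: "nat \<Rightarrow> nat \<Rightarrow> (nat \<Rightarrow> nat \<Rightarrow> real) \<Rightarrow> real" where
  "spec_norm r c A = Sup {sqrt (\<Sum>i<r. (\<Sum>j<c. A i j * x j)^2) | x. (\<Sum>j<c. (x j)^2) \<le> 1}"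

text \<open>Spectral norm of the block column k (0-based block index) of a d x d matrix.\<close>
definition block_col_norm :: "(nat \<Rightarrow> nat) \<Rightarrow> nat \<Rightarrow> (nat \<Rightarrow> nat \<Rightarrow> real) \<Rightarrow> nat \<Rightarrow> real" where
  "block_col_norm n d A k = spec_norm d (n (Suc k) - n k) (\<lambda>i j. A i (n k + j))"

end

theory Submission
  imports Defs
begin

lemma spec_norm_bdd: fixes r c :: nat shows "bdd_above {sqrt (\<Sum>i<r. (\<Sum>j<c. A i j * x j)^2) | x. (\<Sum>j<c. (x j)^2) \<le> (1::real)}"
proof (rule bdd_aboveI)
  fix z assume "z \<in> {sqrt (\<Sum>i<r. (\<Sum>j<c. A i j * x j)^2) | x. (\<Sum>j<c. (x j)^2) \<le> (1::real)}"
  then obtain x where z: "z = sqrt (\<Sum>i<r. (\<Sum>j<c. A i j * x j)^2)" and x: "(\<Sum>j<c. (x j)^2) \<le> 1" by blast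
  have xj: "\<bar>x j\<bar> \<le> 1" if "j < c" for j
  proof -
    have "(x j)^2 \<le> (\<Sum>j<c. (x j)^2)"
      by (rule member_le_sum) (use that in auto)
    then have "(x j)^2 \<le> 1" using x by simp
    then show ?thesis by (simp add: abs_square_le_1)
  qed
  have "(\<Sum>j<c. A i j * x j)^2 \<le> (\<Sum>j<c. \<bar>A i j\<bar>)^2" for i
  proof -
    have "\<bar>\<Sum>j<c. A i j * x j\<bar> \<le> (\<Sum>j<c. \<bar>A i j * x j\<bar>)" by (rule sum_abs)
    also have "\<dots> \<le> (\<Sum>j<c. \<bar>A i j\<bar>)"
      by (intro sum_mono) (use xj in \<open>auto simp: abs_mult intro: mult_left_le\<close>)
    finally show ?thesis
      by (metis abs_ge_zero abs_le_square_iff abs_of_nonneg dual_order.trans sum_nonneg)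
  qed
  then have "(\<Sum>i<r. (\<Sum>j<c. A i j * x j)^2) \<le> (\<Sum>i<r. (\<Sum>j<c. \<bar>A i j\<bar>)^2)"
    by (intro sum_mono) auto
  then show "z \<le> sqrt (\<Sum>i<r. (\<Sum>j<c. \<bar>A i j\<bar>)^2)" using z by simp
qed

lemma spec_norm_nonneg: "spec_norm r c A \<ge> 0"
proof -
  have "sqrt (\<Sum>i<r. (\<Sum>j<c. A i j * (0::real))^2) \<in> {sqrt (\<Sum>i<r. (\<Sum>j<c. A i j * x j)^2) | x. (\<Sum>j<c. (x j)^2) \<le> (1::real)}"
    by (rule CollectI, rule exI[of _ "\<lambda>_. 0"]) simp
  then have "0 \<le> Sup {sqrt (\<Sum>i<r. (\<Sum>j<c. A i j * x j)^2) | x. (\<Sum>j<c. (x j)^2) \<le> (1::real)}"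
    using cSup_upper[OF _ spec_norm_bdd] by fastforce
  then show ?thesis by (simp add: spec_norm_def)
qed

lemma spec_norm_bound:
  "(\<Sum>i<r. (\<Sum>j<c. A i j * x j)^2) \<le> (spec_norm r c A)^2 * (\<Sum>j<c. (x j)^2)"
proof (cases "(\<Sum>j<c. (x j)^2) = 0")
  case True
  then have "\<forall>j\<in>{..<c}. (x j)^2 = 0" by (subst (asm) sum_nonneg_eq_0_iff) auto
  then show ?thesis using True by simp
next
  case False
  define s where "s = (\<Sum>j<c. (x j)^2)"
  have s0: "s > 0" using False unfolding s_def by (metis less_eq_real_def sum_nonneg zero_le_power2)
  define y where "y j = x j / sqrt s" for j
  have "(\<Sum>j<c. (y j)^2) = (\<Sum>j<c. (x j)^2) / s"
    using s0 by (simp add: y_def power_divide sum_divide_distrib)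
  then have y1: "(\<Sum>j<c. (y j)^2) \<le> 1" using s0 by (simp add: s_def)
  have "sqrt (\<Sum>i<r. (\<Sum>j<c. A i j * y j)^2) \<le> spec_norm r c A"
    unfolding spec_norm_def
    by (rule cSup_upper[OF _ spec_norm_bdd]) (use y1 in blast)
  moreover have "(\<Sum>i<r. (\<Sum>j<c. A i j * y j)^2) = (\<Sum>i<r. (\<Sum>j<c. A i j * x j)^2) / s"
    using s0 by (simp add: y_def sum_divide_distrib[symmetric] power_divide)
  ultimately have sq: "sqrt ((\<Sum>i<r. (\<Sum>j<c. A i j * x j)^2) / s) \<le> spec_norm r c A" by simp
  then have "(\<Sum>i<r. (\<Sum>j<c. A i j * x j)^2) / s \<le> (spec_norm r c A)^2"
  proof -
    have t0: "(\<Sum>i<r. (\<Sum>j<c. A i j * x j)^2) / s \<ge> 0" using s0 by (simp add: sum_nonneg)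
    from power_mono[OF sq, of 2] show ?thesis using t0 by simp
  qed
  then show ?thesis using s0 by (simp add: s_def[symmetric] pos_divide_le_eq)
qed


lemma mm_assoc: "(\<Sum>k<d. A r k * (\<Sum>m<d. B k m * x m)) = (\<Sum>m<d. mat_mul d A B r m * (x m::real))"
proof -
  have "(\<Sum>k<d. A r k * (\<Sum>m<d. B k m * x m)) = (\<Sum>k<d. \<Sum>m<d. A r k * B k m * x m)"
    by (simp add: sum_distrib_left mult.assoc)
  also have "\<dots> = (\<Sum>m<d. \<Sum>k<d. A r k * B k m * x m)" by (rule sum.swap)
  also have "\<dots> = (\<Sum>m<d. mat_mul d A B r m * (x m::real))" by (simp add: mat_mul_def sum_distrib_right)
  finally show ?thesis .
qed

lemma core:
  fixes nn :: "nat \<Rightarrow> nat" and d K :: nat and L U Uinv M P :: "nat \<Rightarrow> nat \<Rightarrow> real" and F :: "nat \<Rightarrow> real"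
  assumes nnd: "nn (Suc K) = d"
    and nnmono: "\<And>a b. a \<le> b \<Longrightarrow> b \<le> Suc K \<Longrightarrow> nn a \<le> nn b"
    and Ldiag: "\<And>r. r < d \<Longrightarrow> L r r = 1"
    and Lup: "\<And>r k. r < k \<Longrightarrow> k < d \<Longrightarrow> L r k = 0"
    and Uz: "\<And>j i k. j \<le> K \<Longrightarrow> nn (Suc j) \<le> i \<Longrightarrow> i < d \<Longrightarrow> k < nn (Suc j) \<Longrightarrow> U i k = 0"
    and Uinv_l: "\<And>r t. r<d \<Longrightarrow> t<d \<Longrightarrow> mat_mul d Uinv U r t = (if r=t then 1 else 0)"
    and LU: "\<And>r t. r<d \<Longrightarrow> t<d \<Longrightarrow> M r t = mat_mul d L U r t"
    and Pz: "\<And>j i. j \<le> K \<Longrightarrow> nn (Suc j) \<le> i \<Longrightarrow> P j i = 0"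
    and Pg: "\<And>j r. j \<le> K \<Longrightarrow> r < nn (Suc j) \<Longrightarrow> (\<Sum>i<d. M r i * P j i) = F r"
    and j: "j \<le> K" and i: "i < d"
  shows "P j i = (\<Sum>k<d. Uinv i k * (if k < nn (Suc j) then (\<Sum>m<d. U k m * P K m) else 0))"
proof -
  define g where "g k = (\<Sum>m<d. U k m * P K m)" for k
  define q where "q k = (\<Sum>m<d. U k m * P j m)" for k
  have nj: "nn (Suc j) \<le> d" using nnmono[of "Suc j" "Suc K"] j nnd by simp
  have qhi: "q k = 0" if "nn (Suc j) \<le> k" "k < d" for k
    unfolding q_def
  proof (rule sum.neutral, rule ballI)
    fix m assume "m \<in> {..<d}"
    show "U k m * P j m = 0"
    proof (cases "m < nn (Suc j)")
      case True then show ?thesis using Uz[OF j that] by simp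
    next
      case False then show ?thesis using Pz[OF j] by simp
    qed
  qed
  have Lq: "(\<Sum>k<d. L r k * (q k - g k)) = 0" if "r < nn (Suc j)" for r
  proof -
    have rd: "r < d" using that nj by simp
    have r2: "r < nn (Suc K)" using rd nnd by simp
    have "(\<Sum>k<d. L r k * q k) = (\<Sum>m<d. M r m * P j m)"
      unfolding q_def mm_assoc by (intro sum.cong refl) (simp add: LU rd)
    also have "\<dots> = F r" using Pg[OF j that] .
    finally have 1: "(\<Sum>k<d. L r k * q k) = F r" .
    have "(\<Sum>k<d. L r k * g k) = (\<Sum>m<d. M r m * P K m)"
      unfolding g_def mm_assoc by (intro sum.cong refl) (simp add: LU rd)
    also have "\<dots> = F r" using Pg[OF le_refl r2] .
    finally have 2: "(\<Sum>k<d. L r k * g k) = F r" .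
    show ?thesis using 1 2 by (simp add: right_diff_distrib sum_subtractf)
  qed
  have qg: "q r = g r" if "r < nn (Suc j)" for r
    using that
  proof (induction r rule: less_induct)
    case (less r)
    have rd: "r < d" using less.prems nj by simp
    have "(\<Sum>k<d. L r k * (q k - g k)) = L r r * (q r - g r) + (\<Sum>k\<in>{..<d} - {r}. L r k * (q k - g k))"
      using rd by (subst sum.remove[of _ r]) auto
    also have "(\<Sum>k\<in>{..<d} - {r}. L r k * (q k - g k)) = 0"
    proof (rule sum.neutral, rule ballI)
      fix k assume k: "k \<in> {..<d} - {r}"
      show "L r k * (q k - g k) = 0"
      proof (cases "k < r")
        case True then show ?thesis using less.IH[of k] less.prems by simp
      next
        case False then show ?thesis using k Lup[of r k] by auto
      qed
    qed
    finally show ?case using Lq[OF less.prems] Ldiag[OF rd] by simp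
  qed
  have qeq: "q k = (if k < nn (Suc j) then g k else 0)" if "k < d" for k
    using qg qhi that by auto
  have "(\<Sum>m<d. (if i = m then 1 else 0) * P j m) = (\<Sum>m<d. if i = m then P j m else 0)"
    by (rule sum.cong) auto
  then have "P j i = (\<Sum>m<d. (if i = m then 1 else 0) * P j m)"
    using i by simp
  also have "\<dots> = (\<Sum>m<d. mat_mul d Uinv U i m * P j m)"
    by (intro sum.cong refl) (simp add: Uinv_l i)
  also have "\<dots> = (\<Sum>k<d. Uinv i k * q k)"
    unfolding q_def mm_assoc ..
  also have "\<dots> = (\<Sum>k<d. Uinv i k * (if k < nn (Suc j) then g k else 0))"
    by (intro sum.cong refl) (simp add: qeq)
  finally show ?thesis unfolding g_def .
qed


lemma find_block:
  fixes n :: "nat \<Rightarrow> nat"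
  assumes "n 0 = 0" "i < n m"
  shows "\<exists>b<m. n b \<le> i \<and> i < n (Suc b)"
  using assms(2)
proof (induction m)
  case 0 then show ?case using assms(1) by simp
next
  case (Suc m)
  show ?case
  proof (cases "i < n m")
    case True then show ?thesis using Suc.IH by (meson less_SucI)
  next
    case False then show ?thesis using Suc.prems by (intro exI[of _ m]) auto
  qed
qed

lemma block_order:
  fixes n :: "nat \<Rightarrow> nat"
  assumes mono: "\<And>a b. a \<le> b \<Longrightarrow> b \<le> B \<Longrightarrow> n a \<le> n b"
    and "n bi \<le> i" "i < n (Suc bi)" "n bj \<le> j" "j < n (Suc bj)" "i \<le> j" "bi < B" "bj < B"
  shows "bi \<le> bj"
proof (rule ccontr)
  assume "\<not> bi \<le> bj"
  then have "Suc bj \<le> bi" by simp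
  then have "n (Suc bj) \<le> n bi" using mono assms(7) by simp
  then show False using assms by simp
qed

lemma bilin_sum_left:
  assumes "bilinear a" "finite I"
  shows "a (\<Sum>i\<in>I. c i *\<^sub>R w i) v = (\<Sum>i\<in>I. c i * a (w i) v)"
  using assms(2)
proof (induction I rule: finite_induct)
  case empty then show ?case using bilinear_lzero[OF assms(1)] by simp
next
  case (insert x F)
  then show ?case using bilinear_ladd[OF assms(1)] bilinear_lmul[OF assms(1)] by simp
qed

lemma onb_norm2:
  fixes w :: "nat \<Rightarrow> 'a::real_inner"
  assumes "finite I" "\<And>i k. i \<in> I \<Longrightarrow> k \<in> I \<Longrightarrow> inner (w i) (w k) = (if i = k then 1 else 0)"
  shows "(norm (\<Sum>i\<in>I. c i *\<^sub>R w i))^2 = (\<Sum>i\<in>I. (c i)^2)"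
proof -
  have "(norm (\<Sum>i\<in>I. c i *\<^sub>R w i))^2 = (\<Sum>i\<in>I. \<Sum>k\<in>I. c i * (c k * inner (w k) (w i)))"
    by (simp add: power2_norm_eq_inner inner_sum_left inner_sum_right sum_distrib_left)
  also have "\<dots> = (\<Sum>i\<in>I. \<Sum>k\<in>I. if k = i then c i * c k else 0)"
    by (intro sum.cong refl) (auto simp: assms(2))
  also have "\<dots> = (\<Sum>i\<in>I. (c i)^2)"
    using assms(1) by (simp add: power2_eq_square)
  finally show ?thesis .
qed

lemma onb_coeff:
  fixes w :: "nat \<Rightarrow> 'a::real_inner"
  assumes fin: "finite I" and inj: "inj_on w I"
    and on: "\<And>i k. i \<in> I \<Longrightarrow> k \<in> I \<Longrightarrow> inner (w i) (w k) = (if i = k then 1 else 0)"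
    and x: "x \<in> span (w ` I)"
  shows "x = (\<Sum>i\<in>I. inner x (w i) *\<^sub>R w i)"
proof -
  obtain c where "x = (\<Sum>v\<in>w ` I. c v *\<^sub>R v)"
    using x span_finite[of "w ` I"] fin by auto
  then have xc: "x = (\<Sum>i\<in>I. c (w i) *\<^sub>R w i)"
    using sum.reindex[OF inj, of "\<lambda>v. c v *\<^sub>R v"] by simp
  have "inner x (w k) = c (w k)" if "k \<in> I" for k
  proof -
    have "inner x (w k) = (\<Sum>i\<in>I. c (w i) * inner (w i) (w k))"
      unfolding xc by (simp add: inner_sum_left)
    also have "\<dots> = (\<Sum>i\<in>I. if i = k then c (w k) else 0)"
      by (intro sum.cong refl) (simp add: on that)
    also have "\<dots> = c (w k)" using fin that by simp
    finally show ?thesis .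
  qed
  then show ?thesis using xc by simp
qed

lemma dim_le_fin:
  fixes S T :: "'a::real_vector set"
  assumes "S \<subseteq> T" "span B = T" "finite B"
  shows "dim S \<le> dim T"
proof -
  obtain A where A: "A \<subseteq> T" "independent A" "T \<subseteq> span A" "card A = dim T"
    by (rule basis_exists)
  have "finite A" using independent_span_bound[of B A] A assms by auto
  then show ?thesis using dim_le_card[of S A] A assms by auto
qed

lemma card_indep_le_dim:
  fixes A T :: "'a::real_vector set"
  assumes "independent A" "A \<subseteq> T" "span B = T" "finite B"
  shows "finite A \<and> card A \<le> dim T"
proof -
  obtain A' where A': "A' \<subseteq> T" "independent A'" "T \<subseteq> span A'" "card A' = dim T"
    by (rule basis_exists)
  have "finite A'" using independent_span_bound[of B A'] A' assms by auto
  then show ?thesis using independent_span_bound[of A' A] A' assms by auto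
qed

locale nest =
  fixes Xs :: "nat \<Rightarrow> 'a::real_inner set" and l N :: nat and w :: "nat \<Rightarrow> 'a"
  assumes sub: "\<And>k. k \<le> N + 1 \<Longrightarrow> fin_dim_subspace (Xs (l + k))"
    and nst: "\<And>k. k \<le> N \<Longrightarrow> Xs (l + k) \<subseteq> Xs (l + Suc k)"
    and onb: "nested_onb Xs l N w"
begin

abbreviation "n \<equiv> blk_bd Xs l"

lemma chain: "a \<le> b \<Longrightarrow> b \<le> N + 1 \<Longrightarrow> Xs (l + a) \<subseteq> Xs (l + b)"
proof (induction b)
  case 0 then show ?case by simp
next
  case (Suc b)
  show ?case
  proof (cases "a = Suc b")
    case True then show ?thesis by simp
  next
    case False
    then have "Xs (l + a) \<subseteq> Xs (l + b)" using Suc by simp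
    also have "\<dots> \<subseteq> Xs (l + Suc b)" using nst[of b] Suc.prems by simp
    finally show ?thesis .
  qed
qed

lemma n0: "n 0 = 0" by (simp add: blk_bd_def)

lemma nS: "n (Suc j) = dim (Xs (l + j))" by (simp add: blk_bd_def)

lemma nmono: "a \<le> b \<Longrightarrow> b \<le> N + 2 \<Longrightarrow> n a \<le> n b"
proof (cases a)
  case 0 then show ?thesis using n0 by simp
next
  case (Suc a')
  assume ab: "a \<le> b" "b \<le> N + 2"
  then obtain b' where b: "b = Suc b'" using Suc by (cases b) auto
  obtain B where B: "finite B" "span B = Xs (l + b')"
    using sub[of b'] ab b unfolding fin_dim_subspace_def by auto
  have "Xs (l + a') \<subseteq> Xs (l + b')" using chain[of a' b'] ab b Suc by simp
  then show ?thesis using dim_le_fin[of _ _ B] B Suc b by (simp add: nS)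
qed

lemma mem: "j \<le> N + 1 \<Longrightarrow> i < n (Suc j) \<Longrightarrow> w i \<in> Xs (l + j)"
proof -
  assume j: "j \<le> N + 1" and i: "i < n (Suc j)"
  obtain b where b: "b < Suc j" "n b \<le> i" "i < n (Suc b)" using find_block[OF n0 i] by auto
  have "is_onb w {n b..<n (Suc b)} (blk_space Xs l b)" using onb b j unfolding nested_onb_def by auto
  then have "w i \<in> blk_space Xs l b" using b unfolding is_onb_def by auto
  then have "w i \<in> Xs (l + b)" by (auto simp: blk_space_def split: if_splits)
  then show ?thesis using chain[of b j] b j by auto
qed

lemma orth:
  assumes i: "i < n (N + 2)" and k: "k < n (N + 2)"
  shows "inner (w i) (w k) = (if i = k then 1 else 0)"
proof -
  have gen: "inner (w i) (w k) = (if i = k then 1 else 0)" if ik: "i \<le> k" "i < n (N+2)" "k < n (N+2)" for i k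
  proof -
    obtain bi where bi: "bi < N + 2" "n bi \<le> i" "i < n (Suc bi)" using find_block[OF n0 ik(2)] by auto
    obtain bk where bk: "bk < N + 2" "n bk \<le> k" "k < n (Suc bk)" using find_block[OF n0 ik(3)] by auto
    have le: "bi \<le> bk" using block_order[where n=n and B="N+2" and bi=bi and i=i and bj=bk and j=k, OF nmono] bi bk ik by simp
    show ?thesis
    proof (cases "bi = bk")
      case True
      have "is_onb w {n bi..<n (Suc bi)} (blk_space Xs l bi)" using onb bi unfolding nested_onb_def by auto
      then show ?thesis using bi bk True unfolding is_onb_def by auto
    next
      case False
      then have lt: "bi < bk" using le by simp
      have "is_onb w {n bi..<n (Suc bi)} (blk_space Xs l bi)" using onb bi unfolding nested_onb_def by auto
      then have "w i \<in> blk_space Xs l bi" using bi unfolding is_onb_def by auto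
      then have wi: "w i \<in> Xs (l + bi)" by (auto simp: blk_space_def split: if_splits)
      have "Xs (l + bi) \<subseteq> Xs (l + (bk - 1))" using chain[of bi "bk - 1"] lt bk by simp
      moreover have "l + bk - 1 = l + (bk - 1)" using lt by simp
      ultimately have wi': "w i \<in> Xs (l + bk - 1)" using wi by auto
      have "is_onb w {n bk..<n (Suc bk)} (blk_space Xs l bk)" using onb bk unfolding nested_onb_def by auto
      then have "w k \<in> blk_space Xs l bk" using bk unfolding is_onb_def by auto
      then have "inner (w k) (w i) = 0" using lt wi' by (auto simp: blk_space_def)
      moreover have "i \<noteq> k"
      proof
        assume "i = k"
        have "n (Suc bi) \<le> n bk" using nmono[of "Suc bi" bk] lt bk by simp
        then show False using bi bk \<open>i = k\<close> by simp
      qed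
      ultimately show ?thesis by (simp add: inner_commute)
    qed
  qed
  show ?thesis
  proof (cases "i \<le> k")
    case True then show ?thesis using gen i k by simp
  next
    case False then show ?thesis using gen[of k i] i k by (simp add: inner_commute)
  qed
qed

lemma inj: "m \<le> n (N + 2) \<Longrightarrow> inj_on w {..<m}"
proof (rule inj_onI)
  fix i k assume "m \<le> n (N+2)" "i \<in> {..<m}" "k \<in> {..<m}" "w i = w k"
  then show "i = k" using orth[of i k] orth[of i i] by (auto split: if_splits)
qed

lemma spaneq:
  assumes j: "j \<le> N + 1"
  shows "Xs (l + j) = span (w ` {..<n (Suc j)})"
proof -
  let ?m = "n (Suc j)"
  let ?W = "w ` {..<?m}"
  have md: "?m \<le> n (N + 2)" using nmono[of "Suc j" "N+2"] j by simp
  obtain B where B: "finite B" "span B = Xs (l + j)" using sub[OF j] unfolding fin_dim_subspace_def by auto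
  have WX: "?W \<subseteq> Xs (l + j)" using mem[OF j] by auto
  have sW: "span ?W \<subseteq> Xs (l + j)"
  proof -
    have e: "span (Xs (l + j)) = Xs (l + j)" by (metis B(2) span_span)
    show ?thesis using span_mono[OF WX] unfolding e .
  qed
  have indep: "independent ?W"
  proof (rule pairwise_orthogonal_independent)
    show "pairwise orthogonal ?W"
    proof -
      have "inner (w i) (w k) = 0" if "i < ?m" "k < ?m" "w i \<noteq> w k" for i k
      proof -
        have "i \<noteq> k" using that by auto
        then show ?thesis using orth[of i k] that md by simp
      qed
      then show ?thesis unfolding pairwise_def orthogonal_def by auto
    qed
    show "0 \<notin> ?W"
    proof
      assume "0 \<in> ?W"
      then obtain i where "i < ?m" "w i = 0" by auto
      then show False using orth[of i i] md by simp
    qed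
  qed
  have cW: "card ?W = ?m" using card_image[OF inj[OF md]] by simp
  have "Xs (l + j) \<subseteq> span ?W"
  proof
    fix x assume x: "x \<in> Xs (l + j)"
    show "x \<in> span ?W"
    proof (rule ccontr)
      assume nx: "x \<notin> span ?W"
      have i1: "independent (insert x ?W)" using independent_insertI[OF nx indep] .
      have i2: "insert x ?W \<subseteq> Xs (l + j)" using x WX by auto
      have "card (insert x ?W) \<le> dim (Xs (l + j))"
        using card_indep_le_dim[OF i1 i2 B(2) B(1)] by simp
      moreover have "x \<notin> ?W" using nx span_base by meson
      ultimately have "Suc ?m \<le> dim (Xs (l + j))" using cW by simp
      then show False by (simp add: nS)
    qed
  qed
  then show ?thesis using sW by auto
qed

end


lemma sum_shift_ivl: "a \<le> (b::nat) \<Longrightarrow> (\<Sum>k\<in>{a..<b}. h k) = (\<Sum>t<b - a. h (a + t))"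
proof -
  assume ab: "a \<le> b"
  have "(\<Sum>k\<in>{0 + a..<(b - a) + a}. h k) = (\<Sum>t\<in>{0..<b - a}. h (t + a))"
    by (rule sum.shift_bounds_nat_ivl)
  then show ?thesis using ab by (simp add: atLeast0LessThan add.commute)
qed

lemma telescope:
  fixes n :: "nat \<Rightarrow> nat" and h :: "nat \<Rightarrow> real"
  assumes mono: "\<And>a b. a \<le> b \<Longrightarrow> b \<le> B \<Longrightarrow> n a \<le> n b" and m: "Suc m \<le> B"
  shows "(\<Sum>i<m. \<Sum>k\<in>{n (Suc i)..<n (Suc (Suc i))}. h k) = (\<Sum>k\<in>{n 1..<n (Suc m)}. h k)"
  using m
proof (induction m)
  case 0 then show ?case by simp
next
  case (Suc m)
  have "(\<Sum>i<Suc m. \<Sum>k\<in>{n (Suc i)..<n (Suc (Suc i))}. h k)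
      = (\<Sum>k\<in>{n 1..<n (Suc m)}. h k) + (\<Sum>k\<in>{n (Suc m)..<n (Suc (Suc m))}. h k)"
    using Suc by simp
  also have "\<dots> = (\<Sum>k\<in>{n 1..<n (Suc (Suc m))}. h k)"
    by (rule sum.atLeastLessThan_concat) (use mono Suc.prems in auto)
  finally show ?case .
qed

lemma quasi:
  fixes a :: "'x::real_normed_vector \<Rightarrow> 'y::real_normed_vector \<Rightarrow> real"
  assumes a_bd: "\<And>w v. \<bar>a w v\<bar> \<le> Ca * norm w * norm v"
    and g: "\<gamma> > 0" and w: "w \<noteq> 0"
    and sup: "(SUP v\<in>Y - {0}. a w v / (norm w * norm v)) \<ge> \<gamma>"
    and ne: "Y - {0} \<noteq> {}"
    and eq: "\<And>v. v \<in> Y \<Longrightarrow> a w v = a e v"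
  shows "norm w \<le> Ca / \<gamma> * norm e"
proof -
  have nw: "norm w > 0" using w by simp
  have "(SUP v\<in>Y - {0}. a w v / (norm w * norm v)) \<le> Ca * norm e / norm w"
  proof (rule cSUP_least[OF ne])
    fix v assume v: "v \<in> Y - {0}"
    have nv: "norm v > 0" using v by simp
    have "a w v \<le> Ca * norm e * norm v" using eq[of v] v a_bd[of e v] by simp
    then have "a w v / (norm w * norm v) \<le> Ca * norm e * norm v / (norm w * norm v)"
      using nw nv by (intro divide_right_mono) auto
    also have "\<dots> = Ca * norm e / norm w" using nv by simp
    finally show "a w v / (norm w * norm v) \<le> Ca * norm e / norm w" .
  qed
  then have "\<gamma> \<le> Ca * norm e / norm w" using sup by simp
  then have "\<gamma> * norm w \<le> Ca * norm e" using nw by (simp add: le_divide_eq)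
  then show ?thesis using g by (simp add: le_divide_eq mult.commute)
qed

theorem mainTheorem4:
  fixes a :: "'x::{real_inner,complete_space} \<Rightarrow> 'y::{real_inner,complete_space} \<Rightarrow> real"
    and f :: "'y \<Rightarrow> real" and u :: 'x and C\<^sub>a \<gamma> :: real and l N :: nat
    and Xs :: "nat \<Rightarrow> 'x set" and Ys :: "nat \<Rightarrow> 'y set" and us :: "nat \<Rightarrow> 'x"
    and wX :: "nat \<Rightarrow> 'x" and wY :: "nat \<Rightarrow> 'y"
    and M L U Uinv :: "nat \<Rightarrow> nat \<Rightarrow> real"
  assumes a_bilin: "bilinear a"
    and a_bd: "\<And>w v. \<bar>a w v\<bar> \<le> C\<^sub>a * norm w * norm v"
    and f_lin: "bounded_linear f"
    and u_sol: "\<And>v. a u v = f v"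
    and X_sub: "\<And>k. k \<le> N + 1 \<Longrightarrow> fin_dim_subspace (Xs (l + k))"
    and Y_sub: "\<And>k. k \<le> N + 1 \<Longrightarrow> fin_dim_subspace (Ys (l + k))"
    and X_nest: "\<And>k. k \<le> N \<Longrightarrow> Xs (l + k) \<subseteq> Xs (l + Suc k)"
    and Y_nest: "\<And>k. k \<le> N \<Longrightarrow> Ys (l + k) \<subseteq> Ys (l + Suc k)"
    and dims: "\<And>k. k \<le> N + 1 \<Longrightarrow> dim (Xs (l + k)) = dim (Ys (l + k))"
    and gamma_pos: "\<gamma> > 0"
    and infsup: "\<And>k w. k \<le> N + 1 \<Longrightarrow> w \<in> Xs (l + k) \<Longrightarrow> w \<noteq> 0 \<Longrightarrow>
        (SUP v\<in>Ys (l + k) - {0}. a w v / (norm w * norm v)) \<ge> \<gamma>"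
    and us_in: "\<And>k. k \<le> N + 1 \<Longrightarrow> us (l + k) \<in> Xs (l + k)"
    and us_sol: "\<And>k v. k \<le> N + 1 \<Longrightarrow> v \<in> Ys (l + k) \<Longrightarrow> a (us (l + k)) v = f v"
    and onbX: "nested_onb Xs l N wX"
    and onbY: "nested_onb Ys l N wY"
    and M_def: "\<And>r t. r < dim (Xs (l + N + 1)) \<Longrightarrow> t < dim (Xs (l + N + 1)) \<Longrightarrow>
        M r t = a (wX t) (wY r)"
    and L_lower: "block_lower_unit (blk_bd Xs l) (N + 2) L"
    and U_upper: "block_upper (blk_bd Xs l) (N + 2) U"
    and LU: "\<And>r t. r < dim (Xs (l + N + 1)) \<Longrightarrow> t < dim (Xs (l + N + 1)) \<Longrightarrow>
        M r t = mat_mul (dim (Xs (l + N + 1))) L U r t"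
    and Uinv_r: "\<And>r t. r < dim (Xs (l + N + 1)) \<Longrightarrow> t < dim (Xs (l + N + 1)) \<Longrightarrow>
        mat_mul (dim (Xs (l + N + 1))) U Uinv r t = (if r = t then 1 else 0)"
    and Uinv_l: "\<And>r t. r < dim (Xs (l + N + 1)) \<Longrightarrow> t < dim (Xs (l + N + 1)) \<Longrightarrow>
        mat_mul (dim (Xs (l + N + 1))) Uinv U r t = (if r = t then 1 else 0)"
  shows "(\<Sum>k=l..l+N. (norm (us (k + 1) - us k))\<^sup>2) \<le>
     C\<^sub>a\<^sup>2 / \<gamma>\<^sup>2 * (spec_norm (dim (Xs (l + N + 1))) (dim (Xs (l + N + 1))) U)\<^sup>2
     * Max ((\<lambda>k. (block_col_norm (blk_bd Xs l) (dim (Xs (l + N + 1))) Uinv k)\<^sup>2) ` {1..N+1})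
     * (norm (u - us l))\<^sup>2"
proof -
  interpret X: nest Xs l N wX using X_sub X_nest onbX by unfold_locales
  interpret Y: nest Ys l N wY using Y_sub Y_nest onbY by unfold_locales
  define nn where "nn = blk_bd Xs l"
  define d where "d = dim (Xs (l + N + 1))"
  have nY: "blk_bd Ys l j = nn j" if "j \<le> N + 2" for j
    using that dims[of "j - 1"] by (cases j) (simp_all add: blk_bd_def nn_def)
  have nd: "nn (Suc (N + 1)) = d" by (simp add: nn_def d_def blk_bd_def)
  have n0: "nn 0 = 0" by (simp add: nn_def blk_bd_def)
  have nmono: "\<And>a b. a \<le> b \<Longrightarrow> b \<le> Suc (N + 1) \<Longrightarrow> nn a \<le> nn b"
    using X.nmono by (simp add: nn_def)
  have orthX: "inner (wX i) (wX k) = (if i = k then 1 else 0)" if "i < d" "k < d" for i k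
    using X.orth[of i k] that nd by (simp add: nn_def)
  have Lblk: "\<And>bi bj i j. bi < N + 2 \<Longrightarrow> bj < N + 2 \<Longrightarrow> nn bi \<le> i \<Longrightarrow> i < nn (Suc bi) \<Longrightarrow>
      nn bj \<le> j \<Longrightarrow> j < nn (Suc bj) \<Longrightarrow>
      (bi < bj \<longrightarrow> L i j = 0) \<and> (bi = bj \<longrightarrow> L i j = (if i = j then 1 else 0))"
    using L_lower unfolding block_lower_unit_def in_block_def nn_def by blast
  have Ldiag: "L r r = 1" if "r < d" for r
  proof -
    note hyp = that
    obtain b where b: "b < Suc (N + 1)" "nn b \<le> r" "r < nn (Suc b)"
      using find_block[of nn r "Suc (N+1)", OF n0] hyp nd by auto
    show ?thesis using Lblk[of b b r r] b by simp
  qed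
  have Lup: "L r k = 0" if "r < k" "k < d" for r k
  proof -
    note hyp = that
    obtain br where br: "br < Suc (N + 1)" "nn br \<le> r" "r < nn (Suc br)"
      using find_block[of nn r "Suc (N+1)", OF n0] hyp nd by auto
    obtain bk where bk: "bk < Suc (N + 1)" "nn bk \<le> k" "k < nn (Suc bk)"
      using find_block[of nn k "Suc (N+1)", OF n0] hyp nd by auto
    have "br \<le> bk"
      using block_order[where n=nn and B="Suc (N+1)" and bi=br and i=r and bj=bk and j=k, OF nmono] br bk hyp by simp
    then show ?thesis using Lblk[of br bk r k] br bk hyp by (cases "br = bk") auto
  qed
  have Uz: "U i k = 0" if "j \<le> N + 1" "nn (Suc j) \<le> i" "i < d" "k < nn (Suc j)" for j i k
  proof -
    note hyp = that
    obtain bi where bi: "bi < Suc (N + 1)" "nn bi \<le> i" "i < nn (Suc bi)"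
      using find_block[of nn i "Suc (N+1)", OF n0] hyp nd by auto
    have kd: "k < d" using hyp nmono[of "Suc j" "Suc (N+1)"] nd by simp
    obtain bk where bk: "bk < Suc (N + 1)" "nn bk \<le> k" "k < nn (Suc bk)"
      using find_block[of nn k "Suc (N+1)", OF n0] kd nd by auto
    have "bk < Suc j"
    proof (rule ccontr)
      assume "\<not> bk < Suc j"
      then have "nn (Suc j) \<le> nn bk" using nmono[of "Suc j" bk] bk by simp
      then show False using bk hyp by simp
    qed
    moreover have "Suc j \<le> bi"
    proof (rule ccontr)
      assume "\<not> Suc j \<le> bi"
      then have "nn (Suc bi) \<le> nn (Suc j)" using nmono[of "Suc bi" "Suc j"] hyp by simp
      then show False using bi hyp by simp
    qed
    ultimately have "bk < bi" by simp
    moreover have U': "\<And>bi bj i j. bi < N + 2 \<Longrightarrow> bj < N + 2 \<Longrightarrow> nn bi \<le> i \<Longrightarrow> i < nn (Suc bi) \<Longrightarrow>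
      nn bj \<le> j \<Longrightarrow> j < nn (Suc bj) \<Longrightarrow> bj < bi \<Longrightarrow> U i j = 0"
      using U_upper unfolding block_upper_def in_block_def nn_def by blast
    ultimately show ?thesis using bi bk by simp
  qed
    have Mdef': "\<And>r t. r < d \<Longrightarrow> t < d \<Longrightarrow> M r t = a (wX t) (wY r)" using M_def unfolding d_def .
  have LU': "\<And>r t. r < d \<Longrightarrow> t < d \<Longrightarrow> M r t = mat_mul d L U r t" using LU unfolding d_def .
  have Uinv_l': "\<And>r t. r < d \<Longrightarrow> t < d \<Longrightarrow> mat_mul d Uinv U r t = (if r = t then 1 else 0)"
    using Uinv_l unfolding d_def .
  define P where "P j i = (if i < nn (Suc j) then inner (us (l + j)) (wX i) else 0)" for j i
  have Pz: "P j i = 0" if "j \<le> N + 1" "nn (Suc j) \<le> i" for j i using that by (simp add: P_def)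
  have njd: "nn (Suc j) \<le> d" if "j \<le> N + 1" for j using nmono[of "Suc j" "Suc (N+1)"] that nd by simp
  have us_exp: "us (l + j) = (\<Sum>i<d. P j i *\<^sub>R wX i)" if j: "j \<le> N + 1" for j
  proof -
    have on: "\<And>i k. i \<in> {..<nn (Suc j)} \<Longrightarrow> k \<in> {..<nn (Suc j)} \<Longrightarrow> inner (wX i) (wX k) = (if i = k then 1 else 0)"
      using orthX njd[OF j] by auto
    have inj: "inj_on wX {..<nn (Suc j)}" using X.inj[of "nn (Suc j)"] njd[OF j] nd by (simp add: nn_def)
    have sp: "us (l + j) \<in> span (wX ` {..<nn (Suc j)})" using X.spaneq[OF j] us_in[OF j] by (simp add: nn_def)
    have "us (l + j) = (\<Sum>i<nn (Suc j). inner (us (l + j)) (wX i) *\<^sub>R wX i)"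
      by (rule onb_coeff[OF _ inj on sp]) simp
    also have "\<dots> = (\<Sum>i<nn (Suc j). P j i *\<^sub>R wX i)" by (intro sum.cong refl) (simp add: P_def)
    also have "\<dots> = (\<Sum>i<d. P j i *\<^sub>R wX i)"
      by (rule sum.mono_neutral_right[symmetric]) (use njd[OF j] Pz j in auto)
    finally show ?thesis .
  qed
  have wYmem: "wY r \<in> Ys (l + j)" if "j \<le> N + 1" "r < nn (Suc j)" for j r
    using Y.mem[of j r] that nY[of "Suc j"] by simp
  have Pg: "(\<Sum>i<d. M r i * P j i) = f (wY r)" if j: "j \<le> N + 1" and r: "r < nn (Suc j)" for j r
  proof -
    have rd: "r < d" using r njd[OF j] by simp
    have "f (wY r) = a (us (l + j)) (wY r)" using us_sol[OF j wYmem[OF j r]] by simp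
    also have "\<dots> = (\<Sum>i<d. P j i * a (wX i) (wY r))"
      unfolding us_exp[OF j] by (rule bilin_sum_left[OF a_bilin]) simp
    also have "\<dots> = (\<Sum>i<d. M r i * P j i)" by (intro sum.cong refl) (simp add: Mdef' rd)
    finally show ?thesis by simp
  qed
  have core_app: "P j i = (\<Sum>k<d. Uinv i k * (if k < nn (Suc j) then (\<Sum>m<d. U k m * P (N + 1) m) else 0))"
    if "j \<le> N + 1" "i < d" for j i
    by (rule core[of nn "N + 1" d L U Uinv M P "\<lambda>r. f (wY r)" j i])
      (fact nd | (rule nmono Ldiag Lup Uz Uinv_l' LU' Pz Pg; assumption) | rule that)+
  define g where "g k = (\<Sum>m<d. U k m * P (N + 1) m)" for k
  have core_g: "P j i = (\<Sum>k<d. Uinv i k * (if k < nn (Suc j) then g k else 0))"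
    if "j \<le> N + 1" "i < d" for j i
    using core_app[OF that] unfolding g_def .
  have diffP: "P (Suc j) r - P j r = (\<Sum>t<nn (Suc (Suc j)) - nn (Suc j). Uinv r (nn (Suc j) + t) * g (nn (Suc j) + t))"
    if j: "j \<le> N" and r: "r < d" for j r
  proof -
    have le: "nn (Suc j) \<le> nn (Suc (Suc j))" using nmono[of "Suc j" "Suc (Suc j)"] j by simp
    have sd: "nn (Suc (Suc j)) \<le> d" using njd[of "Suc j"] j by simp
    have "P (Suc j) r - P j r = (\<Sum>k<d. Uinv r k * ((if k < nn (Suc (Suc j)) then g k else 0) - (if k < nn (Suc j) then g k else 0)))"
      using core_g[of "Suc j" r] core_g[of j r] j r
      by (simp add: sum_subtractf[symmetric] right_diff_distrib)
    also have "\<dots> = (\<Sum>k<d. if k \<in> {nn (Suc j)..<nn (Suc (Suc j))} then Uinv r k * g k else 0)"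
      by (intro sum.cong refl) (use le in auto)
    also have "\<dots> = (\<Sum>k\<in>{..<d} \<inter> {nn (Suc j)..<nn (Suc (Suc j))}. Uinv r k * g k)"
      by (simp add: sum.inter_restrict)
    also have "\<dots> = (\<Sum>k\<in>{nn (Suc j)..<nn (Suc (Suc j))}. Uinv r k * g k)"
    proof -
      have "{..<d} \<inter> {nn (Suc j)..<nn (Suc (Suc j))} = {nn (Suc j)..<nn (Suc (Suc j))}" using sd by auto
      then show ?thesis by simp
    qed
    also have "\<dots> = (\<Sum>t<nn (Suc (Suc j)) - nn (Suc j). Uinv r (nn (Suc j) + t) * g (nn (Suc j) + t))"
      by (rule sum_shift_ivl[OF le])
    finally show ?thesis .
  qed
  have normdiff: "(norm (us (l + j) - us (l + j')))^2 = (\<Sum>r<d. (P j r - P j' r)^2)"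
    if "j \<le> N + 1" "j' \<le> N + 1" for j j'
  proof -
    have "us (l + j) - us (l + j') = (\<Sum>r<d. (P j r - P j' r) *\<^sub>R wX r)"
      using us_exp[of j] us_exp[of j'] that by (simp add: sum_subtractf[symmetric] scaleR_diff_left)
    then show ?thesis using onb_norm2[of "{..<d}" wX] orthX by simp
  qed
  define S where "S = spec_norm d d U"
  define Mx where "Mx = Max ((\<lambda>k. (block_col_norm nn d Uinv k)\<^sup>2) ` {1..N+1})"
  have bcn_le: "(block_col_norm nn d Uinv (Suc j))^2 \<le> Mx" if "j \<le> N" for j
    unfolding Mx_def using that by (intro Max_ge finite_imageI imageI) auto
  have Mx0: "Mx \<ge> 0" using bcn_le[of 0] by (meson order_trans zero_le_power2 le0)
  define G where "G j = (\<Sum>t<nn (Suc (Suc j)) - nn (Suc j). (g (nn (Suc j) + t))^2)" for j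
  have step: "(norm (us (l + Suc j) - us (l + j)))^2 \<le> Mx * G j" if j: "j \<le> N" for j
  proof -
    have "(norm (us (l + Suc j) - us (l + j)))^2 = (\<Sum>r<d. (P (Suc j) r - P j r)^2)"
      using normdiff[of "Suc j" j] j by simp
    also have "\<dots> = (\<Sum>r<d. (\<Sum>t<nn (Suc (Suc j)) - nn (Suc j). Uinv r (nn (Suc j) + t) * g (nn (Suc j) + t))^2)"
      by (intro sum.cong refl) (simp add: diffP j)
    also have "\<dots> \<le> (block_col_norm nn d Uinv (Suc j))^2 * G j"
      unfolding block_col_norm_def G_def by (rule spec_norm_bound)
    also have "\<dots> \<le> Mx * G j"
      by (rule mult_right_mono[OF bcn_le[OF j]]) (simp add: G_def sum_nonneg)
    finally show ?thesis .
  qed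
  have LHS_eq: "(\<Sum>k=l..l+N. (norm (us (k + 1) - us k))\<^sup>2) = (\<Sum>j<Suc N. (norm (us (l + Suc j) - us (l + j)))^2)"
  proof -
    have "(\<Sum>k=l..l+N. (norm (us (k + 1) - us k))\<^sup>2) = (\<Sum>j=0..N. (norm (us (j + l + 1) - us (j + l)))\<^sup>2)"
      using sum.shift_bounds_cl_nat_ivl[of "\<lambda>k. (norm (us (k + 1) - us k))\<^sup>2" 0 l N] by (simp add: add.commute)
    also have "\<dots> = (\<Sum>j<Suc N. (norm (us (l + Suc j) - us (l + j)))^2)"
      by (simp add: atLeast0AtMost lessThan_Suc_atMost ac_simps)
    finally show ?thesis .
  qed
  have sumG: "(\<Sum>j<Suc N. G j) = (\<Sum>k\<in>{nn 1..<d}. (g k)^2)"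
  proof -
    have "(\<Sum>j<Suc N. G j) = (\<Sum>j<Suc N. \<Sum>k\<in>{nn (Suc j)..<nn (Suc (Suc j))}. (g k)^2)"
      unfolding G_def by (intro sum.cong refl sum_shift_ivl[symmetric]) (use nmono in auto)
    also have "\<dots> = (\<Sum>k\<in>{nn 1..<nn (Suc (Suc N))}. (g k)^2)"
      by (rule telescope[OF nmono]) auto
    finally show ?thesis using nd by simp
  qed
  have gbound: "(\<Sum>k\<in>{nn 1..<d}. (g k)^2) \<le> S^2 * (norm (us (l + (N + 1)) - us (l + 0)))^2"
  proof -
    have gk: "g k = (\<Sum>m<d. U k m * (P (N + 1) m - P 0 m))" if "nn 1 \<le> k" "k < d" for k
    proof -
      have "(\<Sum>m<d. U k m * P 0 m) = 0"
      proof (rule sum.neutral, rule ballI)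
        fix m assume "m \<in> {..<d}"
        show "U k m * P 0 m = 0"
        proof (cases "m < nn 1")
          case True then show ?thesis using Uz[of 0 k m] that by simp
        next
          case False then show ?thesis using Pz[of 0 m] by simp
        qed
      qed
      then show ?thesis by (simp add: g_def right_diff_distrib sum_subtractf)
    qed
    have "(\<Sum>k\<in>{nn 1..<d}. (g k)^2) = (\<Sum>k\<in>{nn 1..<d}. (\<Sum>m<d. U k m * (P (N + 1) m - P 0 m))^2)"
      by (intro sum.cong refl) (simp add: gk)
    also have "\<dots> \<le> (\<Sum>k<d. (\<Sum>m<d. U k m * (P (N + 1) m - P 0 m))^2)"
      by (rule sum_mono2) auto
    also have "\<dots> \<le> S^2 * (\<Sum>m<d. (P (N + 1) m - P 0 m)^2)"
      unfolding S_def by (rule spec_norm_bound)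
    also have "\<dots> = S^2 * (norm (us (l + (N + 1)) - us (l + 0)))^2"
      using normdiff[of "N + 1" 0] by simp
    finally show ?thesis .
  qed
  have quasi2: "(norm (us (l + (N + 1)) - us (l + 0)))^2 \<le> (C\<^sub>a / \<gamma>)^2 * (norm (u - us l))^2"
  proof (cases "us (l + (N + 1)) - us (l + 0) = 0")
    case True then show ?thesis by simp
  next
    case False
    define w where "w = us (l + (N + 1)) - us (l + 0)"
    have sX: "subspace (Xs (l + (N + 1)))" using X_sub[of "N + 1"] by (simp add: fin_dim_subspace_def)
    have u0: "us (l + 0) \<in> Xs (l + (N + 1))" using us_in[of 0] X.chain[of 0 "N + 1"] by auto
    have wX: "w \<in> Xs (l + (N + 1))"
      unfolding w_def by (rule subspace_diff[OF sX us_in u0]) simp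
    have dpos: "d > 0"
    proof (rule ccontr)
      assume "\<not> d > 0"
      then have "nn (Suc (N + 1)) = 0" using nd by simp
      then have "Xs (l + (N + 1)) = {0}" using X.spaneq[of "N + 1"] by (simp add: nn_def)
      then show False using wX False w_def by simp
    qed
    have y0: "wY 0 \<in> Ys (l + (N + 1))" using wYmem[of "N + 1" 0] dpos nd by simp
    have y1: "wY 0 \<noteq> 0" using Y.orth[of 0 0] nY[of "N + 2"] nd dpos by auto
    have ne: "Ys (l + (N + 1)) - {0} \<noteq> {}" using y0 y1 by blast
    have sup: "(SUP v\<in>Ys (l + (N + 1)) - {0}. a w v / (norm w * norm v)) \<ge> \<gamma>"
      using infsup[of "N + 1" w] wX False w_def by simp
    have eq: "a w v = a (u - us l) v" if "v \<in> Ys (l + (N + 1))" for v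
    proof -
      have "a w v = a (us (l + (N + 1))) v - a (us (l + 0)) v"
        unfolding w_def by (rule bilinear_lsub[OF a_bilin])
      also have "\<dots> = a u v - a (us l) v" using us_sol[of "N + 1" v] that u_sol[of v] by simp
      also have "\<dots> = a (u - us l) v" by (rule bilinear_lsub[OF a_bilin, symmetric])
      finally show ?thesis .
    qed
    have "norm w \<le> C\<^sub>a / \<gamma> * norm (u - us l)"
      by (rule quasi[OF a_bd gamma_pos _ sup ne eq]) (use False w_def in auto)
    moreover have "0 \<le> norm w" by simp
    ultimately have "(norm w)^2 \<le> (C\<^sub>a / \<gamma> * norm (u - us l))^2" by (rule power_mono)
    then show ?thesis unfolding w_def power_mult_distrib .
  qed
  have "(\<Sum>k=l..l+N. (norm (us (k + 1) - us k))\<^sup>2) \<le> (\<Sum>j<Suc N. Mx * G j)"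
    unfolding LHS_eq by (rule sum_mono) (use step in auto)
  also have "\<dots> = Mx * (\<Sum>k\<in>{nn 1..<d}. (g k)^2)" unfolding sum_distrib_left[symmetric] sumG ..
  also have "\<dots> \<le> Mx * (S^2 * (C\<^sub>a / \<gamma>)^2 * (norm (u - us l))^2)"
  proof (rule mult_left_mono[OF _ Mx0])
    have "(\<Sum>k\<in>{nn 1..<d}. (g k)^2) \<le> S^2 * (norm (us (l + (N + 1)) - us (l + 0)))^2" by (rule gbound)
    also have "\<dots> \<le> S^2 * ((C\<^sub>a / \<gamma>)^2 * (norm (u - us l))^2)"
      by (rule mult_left_mono[OF quasi2]) simp
    finally show "(\<Sum>k\<in>{nn 1..<d}. (g k)^2) \<le> S^2 * (C\<^sub>a / \<gamma>)^2 * (norm (u - us l))^2" by (simp add: mult.assoc)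
  qed
  also have "\<dots> = C\<^sub>a\<^sup>2 / \<gamma>\<^sup>2 * S^2 * Mx * (norm (u - us l))^2"
    by (simp add: power_divide)
  finally show ?thesis unfolding Mx_def S_def d_def nn_def by simp
qed

end
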